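(* Let $F>1$ and $s>0$ be constants. Consider the self-adjusting $(1,\lambda)$ EA (defined in the context) with update strength $F$ and success rate $s$, using either standard bit mutation with mutation probability $p\in O(1/n)\cap n^{-O(1)}$ or the heavy-tailed mutation operator with a constant $\beta>1$, on an everywhere hard function $f$ with $d+1=n^{o(\log n)}$ function values. Let $\gamma>1$ be a constant with $p_x^-\le\gamma^{-1}$ for all non-optimal $x$, let $\lambda_1:=4\max\left(\log_\gamma(2d(s+1)),\log_\gamma(n\log n)\right)$, and define the potential \[ g(X_t)=f(x_t)-\frac{s}{s+1}\log_F\left(\max\left(\frac{F^{1/s}}{p_{\min}\lambda_t},1\right)\right). \] Then for $n$ large enough, for every generation $t$ with $f(x_t)<d$ and $\lambda_t\ge\lambda_1$, \[ E[g(X_{t+1})-g(X_t)\mid X_t]\ge\frac{1}{2(s+1)}. \] This also holds when every fitness improvement is counted as an increase of the fitness by exactly $1$.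
   Context: Search space $\{0,1\}^n$; asymptotics with respect to $n\to\infty$. W.l.o.g. $f$ takes values in $\{0,\dots,d\}$ with global optima at value $d$. Self-adjusting $(1,\lambda)$ EA: state $X_t=(x_t,\lambda_t)$ with current search point $x_t$ and real-valued offspring population size $\lambda_t$ (rounded to a nearest integer when needed). Each generation creates $\lambda_t$ offspring independently by mutating $x_t$, picks an offspring $y$ of maximum fitness (ties uniformly at random), sets $x_{t+1}=y$ in any case, and sets $\lambda_{t+1}=\max\{1,\lambda_t/F\}$ if $f(y)>f(x_t)$ and $\lambda_{t+1}=F^{1/s}\lambda_t$ otherwise. Standard bit mutation with probability $p$ flips each bit independently with probability $p$. Heavy-tailed mutation with $\beta>1$ draws $\chi\in\{1,\dots,n/2\}$ with $\Pr[\chi=i]=i^{-\beta}/\sum_{j=1}^{n/2}j^{-\beta}$ and then does standard bit mutation with probability $\chi/n$. For these operators such a constant $\gamma$ exists. $p_x^+$ (resp. $p_x^-$) is the probability that a single offspring of $x$ has strictly larger (resp. smaller) fitness than $x$; $p_{\min}:=\min\{p_x^+ : f(x)<d\}$, $p_{\max}:=\max\{p_x^+ : f(x)<d\}$. $f$ is everywhere hard if $p_{\max}=O(n^{-\varepsilon})$ for some constant $0<\varepsilon<1$. *)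

theory Defs
  imports "HOL-Probability.Probability" "HOL-Library.Landau_Symbols"
begin

text \<open>Search points of {0,1}^n are boolean lists of length n.\<close>

fun sbm :: "real \<Rightarrow> bool list \<Rightarrow> bool list pmf" where
  "sbm q [] = return_pmf []"
| "sbm q (b # bs) = do { c \<leftarrow> bernoulli_pmf q; r \<leftarrow> sbm q bs;
                         return_pmf ((if c then \<not> b else b) # r) }"

definition power_law :: "real \<Rightarrow> nat \<Rightarrow> nat pmf" where
  "power_law \<beta> n = embed_pmf (\<lambda>i. if i \<in> {1..n div 2}
       then real i powr (-\<beta>) / (\<Sum>j\<in>{1..n div 2}. real j powr (-\<beta>)) else 0)"

definition heavy_tailed :: "real \<Rightarrow> bool list \<Rightarrow> bool list pmf" where
  "heavy_tailed \<beta> x = do { k \<leftarrow> power_law \<beta> (length x); sbm (real k / real (length x)) x }"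

definition p_plus :: "(bool list \<Rightarrow> bool list pmf) \<Rightarrow> (bool list \<Rightarrow> nat) \<Rightarrow> bool list \<Rightarrow> real" where
  "p_plus mut f x = measure_pmf.prob (mut x) {y. f y > f x}"

definition p_minus :: "(bool list \<Rightarrow> bool list pmf) \<Rightarrow> (bool list \<Rightarrow> nat) \<Rightarrow> bool list \<Rightarrow> real" where
  "p_minus mut f x = measure_pmf.prob (mut x) {y. f y < f x}"

definition p_min :: "(bool list \<Rightarrow> bool list pmf) \<Rightarrow> (bool list \<Rightarrow> nat) \<Rightarrow> nat \<Rightarrow> nat \<Rightarrow> real" where
  "p_min mut f d n = Min {p_plus mut f x | x. length x = n \<and> f x < d}"

definition nof :: "real \<Rightarrow> nat" where
  "nof l = nat (round l)"

definition ea_step :: "real \<Rightarrow> real \<Rightarrow> (bool list \<Rightarrow> bool list pmf) \<Rightarrow> (bool list \<Rightarrow> nat)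
    \<Rightarrow> bool list \<times> real \<Rightarrow> (bool list \<times> real) pmf" where
  "ea_step F s mut f X = (case X of (x, l) \<Rightarrow> do {
      ys \<leftarrow> replicate_pmf (nof l) (mut x);
      i \<leftarrow> pmf_of_set {i. i < nof l \<and> f (ys ! i) = Max ((\<lambda>j. f (ys ! j)) ` {..<nof l})};
      return_pmf (ys ! i, if f (ys ! i) > f x then max 1 (l / F) else F powr (1 / s) * l) })"

definition lam_pot :: "real \<Rightarrow> real \<Rightarrow> real \<Rightarrow> real \<Rightarrow> real" where
  "lam_pot F s pm l = s / (s + 1) * log F (max (F powr (1 / s) / (pm * l)) 1)"

definition pot :: "real \<Rightarrow> real \<Rightarrow> (bool list \<Rightarrow> nat) \<Rightarrow> real \<Rightarrow> bool list \<times> real \<Rightarrow> real" where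
  "pot F s f pm X = (case X of (x, l) \<Rightarrow> real (f x) - lam_pot F s pm l)"

definition pot_change_unit :: "real \<Rightarrow> real \<Rightarrow> (bool list \<Rightarrow> nat) \<Rightarrow> real
    \<Rightarrow> bool list \<times> real \<Rightarrow> bool list \<times> real \<Rightarrow> real" where
  "pot_change_unit F s f pm X X' = (case X of (x, l) \<Rightarrow> case X' of (y, l') \<Rightarrow>
      (if f y > f x then 1 else real (f y) - real (f x)) - (lam_pot F s pm l' - lam_pot F s pm l))"

end

theory Submission imports Defs begin

lemma sbm_len: "ys \<in> set_pmf (sbm q xs) \<Longrightarrow> length ys = length xs"
  by (induction xs arbitrary: ys) auto

lemma sbm_full: "0 < q \<Longrightarrow> q < 1 \<Longrightarrow> length ys = length xs \<Longrightarrow> ys \<in> set_pmf (sbm q xs)"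
proof (induction xs arbitrary: ys)
  case Nil
  then show ?case by simp
next
  case (Cons b bs)
  then obtain c r where ys: "ys = c # r" and lr: "length r = length bs"
    by (cases ys) auto
  have "r \<in> set_pmf (sbm q bs)" using Cons lr by blast
  then show ?case using Cons(2,3) ys
    by (auto intro!: bexI[of _ "c \<noteq> b"])
qed

lemma heavy_len: "ys \<in> set_pmf (heavy_tailed \<beta> xs) \<Longrightarrow> length ys = length xs"
  by (auto simp: heavy_tailed_def dest: sbm_len)

lemma power_law_1:
  assumes "n \<ge> 2"
  shows "1 \<in> set_pmf (power_law \<beta> n)"
proof -
  define g where "g = (\<lambda>i. if i \<in> {1..n div 2}
       then real i powr (-\<beta>) / (\<Sum>j\<in>{1..n div 2}. real j powr (-\<beta>)) else 0)"
  have S: "(\<Sum>j\<in>{1..n div 2}. real j powr (-\<beta>)) > 0"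
    using assms by (intro sum_pos) auto
  have nn: "\<And>x. 0 \<le> g x" using S by (auto simp: g_def)
  have "(\<integral>\<^sup>+x. g x \<partial>count_space UNIV) = (\<Sum>x\<in>{1..n div 2}. ennreal (g x))"
    by (rule nn_integral_count_space') (auto simp: g_def)
  also have "\<dots> = ennreal (\<Sum>x\<in>{1..n div 2}. g x)"
    using nn by (simp add: sum_ennreal)
  also have "(\<Sum>x\<in>{1..n div 2}. g x) = 1"
    using S by (simp add: g_def flip: sum_divide_distrib)
  finally have pr: "(\<integral>\<^sup>+x. g x \<partial>count_space UNIV) = 1" by simp
  have "g 1 \<noteq> 0" using S assms by (auto simp: g_def)
  then show ?thesis
    unfolding power_law_def g_def[symmetric]
    using set_embed_pmf[of g, OF nn pr] by simp
qed

lemma heavy_full: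
  assumes "length xs \<ge> 2" "length ys = length xs"
  shows "ys \<in> set_pmf (heavy_tailed \<beta> xs)"
proof -
  have "ys \<in> set_pmf (sbm (real 1 / real (length xs)) xs)"
    proof (intro sbm_full)
    have "real (length xs) \<ge> 2" using assms(1) by linarith
    then show "real 1 / real (length xs) < 1" "0 < real 1 / real (length xs)" by (auto simp: divide_less_eq_1)
  qed (use assms in auto)
  then show ?thesis using power_law_1[OF assms(1), of \<beta>]
    unfolding heavy_tailed_def by (auto intro!: bexI[of _ 1])
qed

lemma img_nth: "length ys = k \<Longrightarrow> (\<lambda>j. g (ys ! j)) ` {..<k} = g ` set ys"
  by (auto simp: set_conv_nth image_iff)

lemma ea_map:
  assumes k: "nof l \<ge> 1"
  shows "map_pmf (\<lambda>X'. (g (fst X'), snd X')) (ea_step F s mut g (x,l))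
       = map_pmf (\<lambda>ys. (Max (g ` set ys), if Max (g ` set ys) > g x then max 1 (l/F) else F powr (1/s) * l))
           (replicate_pmf (nof l) (mut x))"
proof -
  define k where "k = nof l"
  have "map_pmf (\<lambda>X'. (g (fst X'), snd X')) (ea_step F s mut g (x,l))
     = bind_pmf (replicate_pmf k (mut x)) (\<lambda>ys. return_pmf (Max (g ` set ys), if Max (g ` set ys) > g x then max 1 (l/F) else F powr (1/s) * l))"
    unfolding ea_step_def k_def[symmetric] prod.case map_bind_pmf
  proof (rule bind_pmf_cong[OF refl])
    fix ys assume "ys \<in> set_pmf (replicate_pmf k (mut x))"
    hence len: "length ys = k" by (simp add: set_replicate_pmf)
    have kk: "k \<ge> 1" using k k_def by simp
    define S where "S = {i. i < k \<and> g (ys ! i) = Max ((\<lambda>j. g (ys ! j)) ` {..<k})}"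
    have im: "(\<lambda>j. g (ys ! j)) ` {..<k} = g ` set ys" using img_nth[OF len] .
    have fin: "finite S" unfolding S_def by simp
    have "Max ((\<lambda>j. g (ys ! j)) ` {..<k}) \<in> (\<lambda>j. g (ys ! j)) ` {..<k}"
      using kk by (intro Max_in) (auto simp: lessThan_empty_iff)
    hence ne: "S \<noteq> {}" unfolding S_def by auto
    have "pmf_of_set S \<bind> (\<lambda>i. map_pmf (\<lambda>X'. (g (fst X'), snd X'))
         (return_pmf (ys ! i, if g x < g (ys ! i) then max 1 (l / F) else F powr (1 / s) * l)))
      = pmf_of_set S \<bind> (\<lambda>i. return_pmf (Max (g ` set ys), if Max (g ` set ys) > g x then max 1 (l/F) else F powr (1/s) * l))"
    proof (rule bind_pmf_cong[OF refl])
      fix i assume "i \<in> set_pmf (pmf_of_set S)"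
      hence "i \<in> S" using fin ne by simp
      hence "g (ys ! i) = Max (g ` set ys)" unfolding S_def im by simp
      then show "map_pmf (\<lambda>X'. (g (fst X'), snd X'))
         (return_pmf (ys ! i, if g x < g (ys ! i) then max 1 (l / F) else F powr (1 / s) * l))
           = return_pmf (Max (g ` set ys), if Max (g ` set ys) > g x then max 1 (l/F) else F powr (1/s) * l)"
        by simp
    qed
    also have "\<dots> = return_pmf (Max (g ` set ys), if Max (g ` set ys) > g x then max 1 (l/F) else F powr (1/s) * l)"
      by simp
    finally show "pmf_of_set {i. i < k \<and> g (ys ! i) = Max ((\<lambda>j. g (ys ! j)) ` {..<k})} \<bind> (\<lambda>i. map_pmf (\<lambda>X'. (g (fst X'), snd X'))
         (return_pmf (ys ! i, if g x < g (ys ! i) then max 1 (l / F) else F powr (1 / s) * l)))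
      = return_pmf (Max (g ` set ys), if Max (g ` set ys) > g x then max 1 (l/F) else F powr (1/s) * l)"
      unfolding S_def .
  qed
  also have "\<dots> = map_pmf (\<lambda>ys. (Max (g ` set ys), if Max (g ` set ys) > g x then max 1 (l/F) else F powr (1/s) * l))
           (replicate_pmf k (mut x))"
    by (simp add: map_pmf_def)
  finally show ?thesis unfolding k_def .
qed

lemma rep_emeasure:
  "emeasure (measure_pmf (replicate_pmf k M)) {ys. set ys \<subseteq> A} = emeasure (measure_pmf M) A ^ k"
proof (induction k)
  case 0
  then show ?case by simp
next
  case (Suc k)
  have "replicate_pmf (Suc k) M = bind_pmf M (\<lambda>x. map_pmf ((#) x) (replicate_pmf k M))"
    by (simp add: map_pmf_def)
  hence "emeasure (measure_pmf (replicate_pmf (Suc k) M)) {ys. set ys \<subseteq> A}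
     = (\<integral>\<^sup>+x. emeasure (measure_pmf (map_pmf ((#) x) (replicate_pmf k M))) {ys. set ys \<subseteq> A} \<partial>M)"
    by simp
  also have "\<dots> = (\<integral>\<^sup>+x. emeasure (measure_pmf M) A ^ k * indicator A x \<partial>M)"
  proof (rule nn_integral_cong)
    fix x
    show "emeasure (measure_pmf (map_pmf ((#) x) (replicate_pmf k M))) {ys. set ys \<subseteq> A}
        = emeasure (measure_pmf M) A ^ k * indicator A x"
      using Suc by (cases "x \<in> A") (auto simp: emeasure_map_pmf vimage_def)
  qed
  also have "\<dots> = emeasure (measure_pmf M) A ^ k * emeasure (measure_pmf M) A"
    by (subst nn_integral_cmult_indicator) auto
  finally show ?case by (simp add: mult.commute)
qed

lemma rep_prob:
  "measure_pmf.prob (replicate_pmf k M) {ys. set ys \<subseteq> A} = measure_pmf.prob M A ^ k"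
  using rep_emeasure[of k M A]
  by (simp add: measure_pmf.emeasure_eq_measure ennreal_power)

lemma pmf_compl: "measure_pmf.prob M (UNIV - A) = 1 - measure_pmf.prob M A"
  using measure_pmf.prob_compl[of A M] by simp

lemma ea_expect:
  fixes \<theta> :: "nat \<Rightarrow> real" and Lp :: "real \<Rightarrow> real"
  assumes k: "nof l \<ge> 1" and fin: "finite (set_pmf (mut x))"
    and t1: "\<And>v. v > g x \<Longrightarrow> \<theta> v \<ge> 1"
    and t0: "\<theta> (g x) \<ge> 0"
    and t2: "\<And>v. v < g x \<Longrightarrow> \<theta> v \<ge> - real (g x)"
  shows "measure_pmf.expectation (ea_step F s mut g (x,l)) (\<lambda>X'. \<theta> (g (fst X')) - (Lp (snd X') - Lp l))
     \<ge> (1 - (Lp (max 1 (l/F)) - Lp l)) * (1 - (1 - p_plus mut g x) ^ nof l)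
       - (Lp (F powr (1/s) * l) - Lp l) * (1 - p_plus mut g x) ^ nof l
       - real (g x) * p_minus mut g x ^ nof l"
proof -
  define k where "k = nof l"
  define Ls where "Ls = Lp (max 1 (l/F)) - Lp l"
  define Lf where "Lf = Lp (F powr (1/s) * l) - Lp l"
  define R where "R = replicate_pmf k (mut x)"
  define V where "V = (\<lambda>ys. Max (g ` set ys))"
  define A where "A = UNIV - {ys. set ys \<subseteq> {y. g y \<le> g x}}"
  define B where "B = {ys. set ys \<subseteq> {y. g y < g x}}"
  have kk: "k \<ge> 1" using k k_def by simp
  have finR: "finite (set_pmf R)"
  proof -
    have "set_pmf R \<subseteq> {xs. set xs \<subseteq> set_pmf (mut x) \<and> length xs = k}"
      by (auto simp: R_def set_replicate_pmf)
    moreover have "finite {xs. set xs \<subseteq> set_pmf (mut x) \<and> length xs = k}"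
      using fin by (rule finite_lists_length_eq)
    ultimately show ?thesis by (rule finite_subset)
  qed
  have "measure_pmf.expectation (ea_step F s mut g (x,l)) (\<lambda>X'. \<theta> (g (fst X')) - (Lp (snd X') - Lp l))
     = measure_pmf.expectation (map_pmf (\<lambda>X'. (g (fst X'), snd X')) (ea_step F s mut g (x,l)))
         (\<lambda>X. \<theta> (fst X) - (Lp (snd X) - Lp l))"
    by simp
  also have "\<dots> = measure_pmf.expectation R
      (\<lambda>ys. \<theta> (V ys) - (Lp (if V ys > g x then max 1 (l/F) else F powr (1/s) * l) - Lp l))"
    unfolding ea_map[OF k] R_def k_def V_def by simp
  also have "\<dots> \<ge> measure_pmf.expectation R
      (\<lambda>ys. - Lf + (1 - Ls + Lf) * indicator A ys - real (g x) * indicator B ys)"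
  proof (rule integral_mono_AE)
    show "integrable (measure_pmf R) (\<lambda>ys. - Lf + (1 - Ls + Lf) * indicator A ys - real (g x) * indicator B ys)"
      using finR by (rule integrable_measure_pmf_finite)
    show "integrable (measure_pmf R) (\<lambda>ys. \<theta> (V ys) - (Lp (if V ys > g x then max 1 (l/F) else F powr (1/s) * l) - Lp l))"
      using finR by (rule integrable_measure_pmf_finite)
    show "AE ys in measure_pmf R. - Lf + (1 - Ls + Lf) * indicator A ys - real (g x) * indicator B ys
        \<le> \<theta> (V ys) - (Lp (if V ys > g x then max 1 (l/F) else F powr (1/s) * l) - Lp l)"
    proof (rule AE_pmfI)
      fix ys assume "ys \<in> set_pmf R"
      hence len: "length ys = k" by (simp add: R_def set_replicate_pmf)
      hence ne: "ys \<noteq> []" using kk by auto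
      have VA: "V ys > g x \<longleftrightarrow> ys \<in> A"
        unfolding V_def A_def using ne by (auto simp: Max_gr_iff not_less)
      have VB: "V ys < g x \<longleftrightarrow> ys \<in> B"
        unfolding V_def B_def using ne by (auto simp: Max_less_iff)
      consider "V ys > g x" | "V ys = g x" | "V ys < g x" by linarith
      then show "- Lf + (1 - Ls + Lf) * indicator A ys - real (g x) * indicator B ys
        \<le> \<theta> (V ys) - (Lp (if V ys > g x then max 1 (l/F) else F powr (1/s) * l) - Lp l)"
      proof cases
        case 1
        then have "ys \<in> A" "ys \<notin> B" using VA VB by auto
        then show ?thesis using 1 t1[of "V ys"] by (simp add: Ls_def)
      next
        case 2
        then have "ys \<notin> A" "ys \<notin> B" using VA VB by auto
        then show ?thesis using 2 t0 by (simp add: Lf_def)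
      next
        case 3
        then have "ys \<notin> A" "ys \<in> B" using VA VB by auto
        then show ?thesis using 3 t2[of "V ys"] by (simp add: Lf_def)
      qed
    qed
  qed
  also have "measure_pmf.expectation R
      (\<lambda>ys. - Lf + (1 - Ls + Lf) * indicator A ys - real (g x) * indicator B ys)
     = - Lf + (1 - Ls + Lf) * measure_pmf.prob R A - real (g x) * measure_pmf.prob R B"
    using finR by (simp add: integrable_measure_pmf_finite)
  also have "measure_pmf.prob R A = 1 - (1 - p_plus mut g x) ^ nof l"
  proof -
    have "measure_pmf.prob R A = 1 - measure_pmf.prob R {ys. set ys \<subseteq> {y. g y \<le> g x}}"
      unfolding A_def by (simp add: pmf_compl)
    also have "measure_pmf.prob R {ys. set ys \<subseteq> {y. g y \<le> g x}} = measure_pmf.prob (mut x) {y. g y \<le> g x} ^ k"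
      unfolding R_def by (rule rep_prob)
    also have "measure_pmf.prob (mut x) {y. g y \<le> g x} = 1 - p_plus mut g x"
    proof -
      have "{y. g y \<le> g x} = UNIV - {y. g y > g x}" by auto
      then show ?thesis by (simp add: p_plus_def pmf_compl)
    qed
    finally show ?thesis by (simp add: k_def)
  qed
  also have "measure_pmf.prob R B = p_minus mut g x ^ nof l"
    unfolding R_def B_def k_def p_minus_def by (rule rep_prob)
  finally show ?thesis unfolding Ls_def Lf_def by (simp add: algebra_simps)
qed

lemma lam_pot_mono:
  assumes F: "F > 1" and s: "s > 0" and pm: "pm > 0" and l: "0 < l" "l \<le> l'"
  shows "lam_pot F s pm l' \<le> lam_pot F s pm l"
proof -
  have a: "F powr (1/s) > 0" using F by simp
  have "F powr (1/s) / (pm * l') \<le> F powr (1/s) / (pm * l)"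
    using a pm l by (intro divide_left_mono) (auto intro: mult_left_mono)
  hence "max (F powr (1/s) / (pm * l')) 1 \<le> max (F powr (1/s) / (pm * l)) 1" by simp
  hence "log F (max (F powr (1/s) / (pm * l')) 1) \<le> log F (max (F powr (1/s) / (pm * l)) 1)"
    using F by (subst log_le_cancel_iff) auto
  then show ?thesis unfolding lam_pot_def using s
    by (intro mult_left_mono) auto
qed

lemma lam_pot_succ:
  assumes F: "F > 1" and s: "s > 0" and pm: "pm > 0" and l: "0 < l"
  shows "lam_pot F s pm (max 1 (l/F)) - lam_pot F s pm l \<le> s / (s+1)"
proof -
  define a where "a = F powr (1/s)"
  have a: "a > 0" using F by (simp add: a_def)
  define l' where "l' = max 1 (l/F)"
  have l': "l' \<ge> l / F" "l' > 0" by (auto simp: l'_def)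
  have pl: "pm * (l/F) \<le> pm * l'" using pm l' by (intro mult_left_mono) auto
  have "a / (pm * l') \<le> a / (pm * (l/F))"
    using a pm l l' F pl by (intro divide_left_mono) auto
  also have "\<dots> = F * (a / (pm * l))" using F by (simp add: field_simps)
  finally have h: "a / (pm * l') \<le> F * (a / (pm * l))" .
  have h2: "F * (a / (pm * l)) \<le> F * max (a / (pm * l)) 1" using F by (intro mult_left_mono) auto
  have h3: "1 * 1 \<le> F * max (a / (pm * l)) 1" using F by (intro mult_mono) auto
  have "max (a / (pm * l')) 1 \<le> F * max (a / (pm * l)) 1"
    using h h2 h3 by (auto simp: max_def)
  hence "log F (max (a / (pm * l')) 1) \<le> log F (F * max (a / (pm * l)) 1)"
    using F by (subst log_le_cancel_iff) auto
  also have "\<dots> = 1 + log F (max (a / (pm * l)) 1)"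
    using F by (subst log_mult) auto
  finally have "s / (s+1) * log F (max (a / (pm * l')) 1) \<le> s / (s+1) * (1 + log F (max (a / (pm * l)) 1))"
    using s by (intro mult_left_mono) auto
  then show ?thesis unfolding lam_pot_def a_def[symmetric] l'_def[symmetric]
    by (simp add: algebra_simps)
qed

lemma lam_pot_fail_small:
  assumes F: "F > 1" and s: "s > 0" and pm: "pm > 0" and l: "0 < l" and small: "pm * l \<le> 1"
  shows "lam_pot F s pm (F powr (1/s) * l) - lam_pot F s pm l = - 1 / (s+1)"
proof -
  define a where "a = F powr (1/s)"
  have a: "a \<ge> 1" using F s by (simp add: a_def ge_one_powr_ge_zero)
  have P: "pm * l > 0" using pm l by simp
  have m1: "max (a / (pm * (a * l))) 1 = 1 / (pm * l)"
    using a P small by (auto simp: max_def field_simps)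
  have m2: "max (a / (pm * l)) 1 = a / (pm * l)"
    using a P small by (auto simp: max_def field_simps)
  have "log F (1 / (pm * l)) = - log F (pm * l)"
    using P F by (subst log_divide_pos) auto
  moreover have "log F (a / (pm * l)) = 1/s - log F (pm * l)"
    using P F a by (subst log_divide_pos) (auto simp: a_def)
  ultimately have "lam_pot F s pm (a * l) - lam_pot F s pm l
      = s/(s+1) * (- log F (pm * l)) - s/(s+1) * (1/s - log F (pm * l))"
    unfolding lam_pot_def a_def[symmetric] m1 m2 by simp
  also have "\<dots> = - (s/(s+1) * (1/s))" by (simp add: algebra_simps)
  also have "s/(s+1) * (1/s) = 1/(s+1)" using s by simp
  finally show ?thesis unfolding a_def by simp
qed

lemma lam_pot_fail:
  assumes F: "F > 1" and s: "s > 0" and pm: "pm > 0" and l: "0 < l"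
  shows "lam_pot F s pm (F powr (1/s) * l) - lam_pot F s pm l \<le> 0"
proof -
  have "F powr (1/s) \<ge> 1" using F s by (simp add: ge_one_powr_ge_zero)
  hence "l \<le> F powr (1/s) * l" using l by simp
  then show ?thesis using lam_pot_mono[OF F s pm l] by simp
qed

lemma nof_ge: assumes "l \<ge> 10" shows "real (nof l) \<ge> (19/20) * l"
proof -
  have r: "of_int (round l) \<ge> l - 1/2" by (rule of_int_round_ge)
  hence "round l \<ge> 0" using assms by linarith
  hence "real (nof l) = of_int (round l)" by (simp add: nof_def)
  then show ?thesis using r assms by linarith
qed

lemma core:
  fixes F s pm pp pmi gx l :: real
  assumes F: "F > 1" and s: "s > 0" and pm: "pm > 0" "pm \<le> pp" and pp: "pp \<le> 1"
    and l: "l \<ge> 10"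
    and del: "gx * pmi ^ nof l \<le> 1 / (18 * (s+1))"
  shows "(1 - (lam_pot F s pm (max 1 (l/F)) - lam_pot F s pm l)) * (1 - (1 - pp) ^ nof l)
       - (lam_pot F s pm (F powr (1/s) * l) - lam_pot F s pm l) * (1 - pp) ^ nof l
       - gx * pmi ^ nof l \<ge> 1 / (2 * (s+1))"
proof -
  define k where "k = nof l"
  define Q where "Q = (1 - pp) ^ k"
  define Ls where "Ls = lam_pot F s pm (max 1 (l/F)) - lam_pot F s pm l"
  define Lf where "Lf = lam_pot F s pm (F powr (1/s) * l) - lam_pot F s pm l"
  have l0: "l > 0" using l by simp
  have Q0: "Q \<ge> 0" "Q \<le> 1" using pm pp by (auto simp: Q_def power_le_one)
  have Ls: "Ls \<le> s / (s+1)" unfolding Ls_def by (rule lam_pot_succ[OF F s pm(1) l0])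
  have "1 - Ls \<ge> 1 / (s+1)" using Ls s by (simp add: field_simps)
  hence A: "(1 - Ls) * (1 - Q) \<ge> 1 / (s+1) * (1 - Q)" using Q0 by (intro mult_right_mono) auto
  show ?thesis
  proof (cases "pm * l \<le> 1")
    case True
    have "Lf = - 1 / (s+1)" unfolding Lf_def by (rule lam_pot_fail_small[OF F s pm(1) l0 True])
    hence "(1 - Ls) * (1 - Q) - Lf * Q - gx * pmi ^ k \<ge> 1 / (s+1) * (1 - Q) + 1/(s+1) * Q - 1 / (18 * (s+1))"
      using A del unfolding k_def by (simp add: field_simps)
    also have "1 / (s+1) * (1 - Q) + 1/(s+1) * Q = 1 / (s+1)"
      by (simp add: add_divide_distrib[symmetric])
    also have "1 / (s+1) - 1 / (18 * (s+1)) \<ge> 1 / (2 * (s+1))"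
    proof -
      define u where "u = 1/(s+1)"
      have e: "1/(18*(s+1)) = u/18" "1/(2*(s+1)) = u/2" by (simp_all add: u_def)
      have "u > 0" using s by (simp add: u_def)
      then show ?thesis unfolding e u_def[symmetric] by linarith
    qed
    finally show ?thesis unfolding Q_def Ls_def Lf_def k_def by simp
  next
    case False
    have Lf: "Lf \<le> 0" unfolding Lf_def by (rule lam_pot_fail[OF F s pm(1) l0])
    have "Q \<le> (1 - pm) ^ k" unfolding Q_def using pm pp by (intro power_mono) auto
    also have "\<dots> \<le> exp (- pm) ^ k" using pm pp by (intro power_mono) (auto simp: exp_ge_add_one_self[of "-pm", simplified])
    also have "\<dots> = exp (- (pm * real k))" by (simp add: exp_of_nat_mult[symmetric] algebra_simps)
    also have "\<dots> \<le> exp (- (19/20))"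
    proof -
      have "real k \<ge> (19/20) * l" unfolding k_def by (rule nof_ge[OF l])
      hence "pm * real k \<ge> pm * ((19/20) * l)" using pm by (intro mult_left_mono) auto
      then show ?thesis using False by simp
    qed
    also have "exp (- (19/20)) = 1 / exp ((19/20)::real)" by (simp add: exp_minus field_simps)
    also have "\<dots> \<le> 1 / (1 + (19/20) + (19/20)^2/2)"
      using exp_lower_Taylor_quadratic[of "(19/20)::real"] by (intro divide_left_mono) (auto intro!: mult_pos_pos add_pos_nonneg)
    finally have Qb: "Q \<le> 1 / (1 + (19/20) + (19/20)^2/2)" .
    have B: "- Lf * Q \<ge> 0" using Lf Q0 by (simp add: mult_nonpos_nonneg)
    have Qb': "Q \<le> 800/1921" using Qb by (simp add: power2_eq_square)
    define u where "u = 1/(s+1)"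
    have e: "1/(18*(s+1)) = u/18" "1/(2*(s+1)) = u/2" by (simp_all add: u_def)
    have u0: "u > 0" using s by (simp add: u_def)
    have C0: "u * (1 - Q) \<ge> u * (1 - 800/1921)" using Qb' u0 by (intro mult_left_mono) auto
    have C: "u * (1 - Q) \<ge> 1121/1921 * u" using C0 by simp
    have B': "Lf * Q \<le> 0" using B by simp
    have "(1 - Ls) * (1 - Q) - Lf * Q - gx * pmi ^ k \<ge> 1 / (2 * (s+1))"
      using A B' del C u0 unfolding k_def e u_def[symmetric] by linarith
    then show ?thesis unfolding Q_def Ls_def Lf_def k_def by simp
  qed
qed

lemma del_bound:
  fixes \<gamma> s l pmi :: real and D gx n k :: nat
  assumes g: "\<gamma> > 1" and s: "s > 0" and D: "D \<ge> 1" and gx: "gx \<le> D"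
    and pmi: "0 \<le> pmi" "pmi \<le> 1 / \<gamma>"
    and nl: "real n * ln (real n) \<ge> 9"
    and k: "real k \<ge> l / 2"
    and lb: "l \<ge> 4 * max (log \<gamma> (2 * real D * (s + 1))) (log \<gamma> (real n * ln (real n)))"
  shows "real gx * pmi ^ k \<le> 1 / (18 * (s+1))"
proof -
  define A where "A = log \<gamma> (2 * real D * (s + 1))"
  define B where "B = log \<gamma> (real n * ln (real n))"
  have DA: "2 * real D * (s + 1) > 0" using D s by simp
  have nl0: "real n * ln (real n) > 0" using nl by simp
  have "pmi ^ k \<le> (1/\<gamma>) ^ k" using pmi by (intro power_mono) auto
  also have "(1/\<gamma>) ^ k = \<gamma> powr (- real k)"
    using g by (simp add: powr_minus powr_realpow power_one_over inverse_eq_divide)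
  also have "\<dots> \<le> \<gamma> powr (- (A + B))"
  proof (rule powr_mono)
    have "A + B \<le> 2 * max A B" by simp
    then show "- real k \<le> - (A + B)" using k lb unfolding A_def B_def by linarith
  qed (use g in auto)
  also have "\<gamma> powr (- (A + B)) = 1 / (2 * real D * (s + 1)) * (1 / (real n * ln (real n)))"
  proof -
    have "\<gamma> powr A = 2 * real D * (s + 1)" unfolding A_def using g DA by simp
    moreover have "\<gamma> powr B = real n * ln (real n)" unfolding B_def using g nl0 by simp
    moreover have "\<gamma> powr (- (A + B)) = inverse (\<gamma> powr A) * inverse (\<gamma> powr B)"
      by (simp only: powr_minus powr_add inverse_mult_distrib)
    ultimately show ?thesis by (simp only: inverse_eq_divide)
  qed
  finally have P: "pmi ^ k \<le> 1 / (2 * real D * (s + 1)) * (1 / (real n * ln (real n)))" .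
  have "real gx * pmi ^ k \<le> real D * (1 / (2 * real D * (s + 1)) * (1 / (real n * ln (real n))))"
    using P gx pmi by (intro mult_mono) auto
  also have "\<dots> = 1 / (2 * (s + 1)) * (1 / (real n * ln (real n)))"
    using D by simp
  also have "\<dots> \<le> 1 / (2 * (s + 1)) * (1 / 9)"
    using nl s by (intro mult_left_mono divide_left_mono) auto
  also have "\<dots> = 1 / (18 * (s+1))" by simp
  finally show ?thesis .
qed

lemma per_n:
  fixes F s \<gamma> l :: real and M :: "bool list \<Rightarrow> bool list pmf" and g :: "bool list \<Rightarrow> nat"
    and D n :: nat and x :: "bool list"
  assumes F: "F > 1" and s: "s > 0" and g: "\<gamma> > 1"
    and fin: "\<And>x. finite (set_pmf (M x))"
    and full: "\<And>x y. length x = n \<Longrightarrow> length y = n \<Longrightarrow> y \<in> set_pmf (M x)"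
    and opt: "\<exists>y. length y = n \<and> g y = D"
    and gb: "\<forall>x. length x = n \<and> g x < D \<longrightarrow> p_minus M g x \<le> 1 / \<gamma>"
    and n1: "real n \<ge> \<gamma> powr 3" and n2: "n \<ge> 9"
    and len: "length x = n" and lt: "g x < D"
    and lb: "l \<ge> 4 * max (log \<gamma> (2 * real D * (s + 1))) (log \<gamma> (real n * ln (real n)))"
  shows "measure_pmf.expectation (ea_step F s M g (x, l))
            (\<lambda>X'. pot F s g (p_min M g D n) X' - pot F s g (p_min M g D n) (x, l)) \<ge> 1 / (2 * (s + 1))
      \<and> measure_pmf.expectation (ea_step F s M g (x, l))
            (\<lambda>X'. pot_change_unit F s g (p_min M g D n) (x, l) X') \<ge> 1 / (2 * (s + 1))"
proof -
  define pm where "pm = p_min M g D n"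
  define PS where "PS = (\<lambda>x. p_plus M g x) ` {x. length x = n \<and> g x < D}"
  have PS_eq: "{p_plus M g x | x. length x = n \<and> g x < D} = PS" unfolding PS_def by blast
  have "finite {x :: bool list. set x \<subseteq> UNIV \<and> length x = n}" by (rule finite_lists_length_eq) simp
  hence "finite {x :: bool list. length x = n \<and> g x < D}" by (rule rev_finite_subset) auto
  hence finPS: "finite PS" unfolding PS_def by simp
  have pos: "p_plus M g z > 0" if "length z = n" "g z < D" for z
  proof -
    obtain y where y: "length y = n" "g y = D" using opt by blast
    have "y \<in> set_pmf (M z)" using full that y by blast
    then show ?thesis unfolding p_plus_def using y that by (intro measure_pmf_posI) auto
  qed
  have xPS: "p_plus M g x \<in> PS" unfolding PS_def using len lt by blast
  have pm_def': "pm = Min PS" unfolding pm_def p_min_def PS_eq ..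
  have pm0: "pm > 0" using Min_in[OF finPS] xPS pos unfolding pm_def' PS_def by force
  have pmle: "pm \<le> p_plus M g x" unfolding pm_def' using finPS xPS by simp
  have pp1: "p_plus M g x \<le> 1" unfolding p_plus_def by simp
  have e1: "exp (1::real) \<le> 3" using exp_bound[of "1::real"] by simp
  have lnn: "ln (real n) \<ge> 1" using n2 e1 by (subst ln_ge_iff) auto
  have nln: "real n * ln (real n) \<ge> real n" using lnn n2 by simp
  have gp: "\<gamma> powr 3 \<le> real n * ln (real n)" using nln n1 by linarith
  have "log \<gamma> (real n * ln (real n)) \<ge> 3"
    using g gp n2 lnn by (subst le_log_iff) auto
  hence l12: "l \<ge> 12" using lb by linarith
  hence l10: "l \<ge> 10" by simp
  have kl: "real (nof l) \<ge> 19/20 * l" by (rule nof_ge[OF l10])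
  hence k1: "nof l \<ge> 1" using l12 by linarith
  have pmi: "0 \<le> p_minus M g x" "p_minus M g x \<le> 1 / \<gamma>" using gb len lt by (auto simp: p_minus_def)
  have del: "real (g x) * p_minus M g x ^ nof l \<le> 1 / (18 * (s+1))"
    using g s _ _ pmi _ _ lb
  proof (rule del_bound)
    show "1 \<le> D" "g x \<le> D" using lt by auto
    show "9 \<le> real n * ln (real n)" using nln n2 by linarith
    show "l / 2 \<le> real (nof l)" using kl l12 by linarith
  qed
  have C: "(1 - (lam_pot F s pm (max 1 (l/F)) - lam_pot F s pm l)) * (1 - (1 - p_plus M g x) ^ nof l)
       - (lam_pot F s pm (F powr (1/s) * l) - lam_pot F s pm l) * (1 - p_plus M g x) ^ nof l
       - real (g x) * p_minus M g x ^ nof l \<ge> 1 / (2 * (s+1))"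
    by (rule core[OF F s pm0 pmle pp1 l10 del])
  have E1: "measure_pmf.expectation (ea_step F s M g (x,l))
      (\<lambda>X'. (\<lambda>v. real v - real (g x)) (g (fst X')) - (lam_pot F s pm (snd X') - lam_pot F s pm l))
     \<ge> (1 - (lam_pot F s pm (max 1 (l/F)) - lam_pot F s pm l)) * (1 - (1 - p_plus M g x) ^ nof l)
       - (lam_pot F s pm (F powr (1/s) * l) - lam_pot F s pm l) * (1 - p_plus M g x) ^ nof l
       - real (g x) * p_minus M g x ^ nof l"
    by (rule ea_expect[OF k1 fin]) auto
  have E2: "measure_pmf.expectation (ea_step F s M g (x,l))
      (\<lambda>X'. (\<lambda>v. if v > g x then 1 else real v - real (g x)) (g (fst X')) - (lam_pot F s pm (snd X') - lam_pot F s pm l))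
     \<ge> (1 - (lam_pot F s pm (max 1 (l/F)) - lam_pot F s pm l)) * (1 - (1 - p_plus M g x) ^ nof l)
       - (lam_pot F s pm (F powr (1/s) * l) - lam_pot F s pm l) * (1 - p_plus M g x) ^ nof l
       - real (g x) * p_minus M g x ^ nof l"
    by (rule ea_expect[OF k1 fin]) auto
  have f1: "(\<lambda>X'. pot F s g pm X' - pot F s g pm (x, l))
      = (\<lambda>X'. (\<lambda>v. real v - real (g x)) (g (fst X')) - (lam_pot F s pm (snd X') - lam_pot F s pm l))"
    by (auto simp: pot_def fun_eq_iff split: prod.splits)
  have f2: "(\<lambda>X'. pot_change_unit F s g pm (x, l) X')
      = (\<lambda>X'. (\<lambda>v. if v > g x then 1 else real v - real (g x)) (g (fst X')) - (lam_pot F s pm (snd X') - lam_pot F s pm l))"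
    by (auto simp: pot_change_unit_def fun_eq_iff split: prod.splits)
  show ?thesis unfolding pm_def[symmetric] f1 f2 using E1 E2 C by linarith
qed

theorem lemma3p6:
  fixes F s \<gamma> :: real
    and mut :: "nat \<Rightarrow> bool list \<Rightarrow> bool list pmf"
    and f :: "nat \<Rightarrow> bool list \<Rightarrow> nat"
    and d :: "nat \<Rightarrow> nat"
  assumes F: "F > 1" and s: "s > 0"
    and mutation:
      "(\<exists>p :: nat \<Rightarrow> real. (\<forall>n. 0 \<le> p n \<and> p n \<le> 1)
          \<and> p \<in> O(\<lambda>n. 1 / real n)
          \<and> (\<exists>C. \<forall>\<^sub>F n in sequentially. p n \<ge> real n powr (- C))
          \<and> mut = (\<lambda>n. sbm (p n)))
       \<or> (\<exists>\<beta> > 1. mut = (\<lambda>n. heavy_tailed \<beta>))"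
    and range_f: "\<And>n x. length x = n \<Longrightarrow> f n x \<le> d n"
    and optimum: "\<And>n. \<exists>x. length x = n \<and> f n x = d n"
    and everywhere_hard: "\<exists>\<epsilon> C. 0 < \<epsilon> \<and> \<epsilon> < 1 \<and>
          (\<forall>\<^sub>F n in sequentially. \<forall>x. length x = n \<and> f n x < d n \<longrightarrow>
              p_plus (mut n) (f n) x \<le> C * real n powr (- \<epsilon>))"
    and few_values: "(\<lambda>n. ln (real (d n) + 1)) \<in> o(\<lambda>n. (ln (real n))^2)"
    and gamma: "\<gamma> > 1"
    and gamma_bound: "\<forall>\<^sub>F n in sequentially. \<forall>x. length x = n \<and> f n x < d n \<longrightarrow>
              p_minus (mut n) (f n) x \<le> 1 / \<gamma>"
  shows "\<forall>\<^sub>F n in sequentially. \<forall>x l.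
      length x = n \<longrightarrow> f n x < d n \<longrightarrow>
      l \<ge> 4 * max (log \<gamma> (2 * real (d n) * (s + 1))) (log \<gamma> (real n * ln (real n))) \<longrightarrow>
        measure_pmf.expectation (ea_step F s (mut n) (f n) (x, l))
            (\<lambda>X'. pot F s (f n) (p_min (mut n) (f n) (d n) n) X'
                   - pot F s (f n) (p_min (mut n) (f n) (d n) n) (x, l)) \<ge> 1 / (2 * (s + 1))
      \<and> measure_pmf.expectation (ea_step F s (mut n) (f n) (x, l))
            (\<lambda>X'. pot_change_unit F s (f n) (p_min (mut n) (f n) (d n) n) (x, l) X')
          \<ge> 1 / (2 * (s + 1))"
proof -
  have fin: "\<And>n x. finite (set_pmf (mut n x))"
  proof -
    fix n x
    have "set_pmf (mut n x) \<subseteq> {y :: bool list. set y \<subseteq> UNIV \<and> length y = length x}"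
      using mutation by (auto dest: sbm_len heavy_len)
    moreover have "finite {y :: bool list. set y \<subseteq> UNIV \<and> length y = length x}"
      by (rule finite_lists_length_eq) simp
    ultimately show "finite (set_pmf (mut n x))" by (rule finite_subset)
  qed
  have full: "\<forall>\<^sub>F n in sequentially. \<forall>x y. length x = n \<longrightarrow> length y = n \<longrightarrow> y \<in> set_pmf (mut n x)"
    using mutation
  proof
    assume "\<exists>p :: nat \<Rightarrow> real. (\<forall>n. 0 \<le> p n \<and> p n \<le> 1)
          \<and> p \<in> O(\<lambda>n. 1 / real n)
          \<and> (\<exists>C. \<forall>\<^sub>F n in sequentially. p n \<ge> real n powr (- C))
          \<and> mut = (\<lambda>n. sbm (p n))"
    then obtain p C where p: "p \<in> O(\<lambda>n. 1 / real n)" "\<forall>\<^sub>F n in sequentially. p n \<ge> real n powr (- C)"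
      "mut = (\<lambda>n. sbm (p n))" by blast
    from p(1) obtain c where c: "c > 0" "\<forall>\<^sub>F n in sequentially. norm (p n) \<le> c * norm (1 / real n)"
      by (rule landau_o.bigE)
    have ev: "\<forall>\<^sub>F n in sequentially. real n > c \<and> n \<ge> 1"
    proof -
      have "\<forall>\<^sub>F n in sequentially. n \<ge> nat \<lceil>c\<rceil> + 1" by (rule eventually_ge_at_top)
      then show ?thesis by eventually_elim linarith
    qed
    from c(2) p(2) ev show ?thesis
    proof eventually_elim
      case (elim n)
      have n0: "real n > 0" using elim by simp
      have "0 < real n powr (- C)" using n0 by simp
      hence p0: "p n > 0" using elim by linarith
      have "p n \<le> c * (1 / real n)" using elim n0 by simp
      also have "\<dots> < 1" using elim n0 by (simp add: field_simps)
      finally have p1: "p n < 1" .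
      show ?case using p0 p1 p(3) by (auto intro: sbm_full)
    qed
  next
    assume "\<exists>\<beta>>1. mut = (\<lambda>n. heavy_tailed \<beta>)"
    then obtain \<beta> where b: "mut = (\<lambda>n. heavy_tailed \<beta>)" by blast
    have "\<forall>\<^sub>F n in sequentially. n \<ge> 2" by (rule eventually_ge_at_top)
    then show ?thesis
    proof eventually_elim
      case (elim n)
      then show ?case using b by (auto intro: heavy_full)
    qed
  qed
  have big: "\<forall>\<^sub>F n in sequentially. real n \<ge> \<gamma> powr 3 \<and> n \<ge> 9"
  proof -
    have "\<forall>\<^sub>F n in sequentially. n \<ge> nat \<lceil>\<gamma> powr 3\<rceil> + 9" by (rule eventually_ge_at_top)
    then show ?thesis by eventually_elim linarith
  qed
  from full big gamma_bound show ?thesis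
  proof eventually_elim
    case (elim n)
    show ?case
    proof (intro allI impI)
      fix x l
      assume len: "length x = n" and lt: "f n x < d n"
        and lb: "l \<ge> 4 * max (log \<gamma> (2 * real (d n) * (s + 1))) (log \<gamma> (real n * ln (real n)))"
      show "measure_pmf.expectation (ea_step F s (mut n) (f n) (x, l))
            (\<lambda>X'. pot F s (f n) (p_min (mut n) (f n) (d n) n) X'
                   - pot F s (f n) (p_min (mut n) (f n) (d n) n) (x, l)) \<ge> 1 / (2 * (s + 1))
      \<and> measure_pmf.expectation (ea_step F s (mut n) (f n) (x, l))
            (\<lambda>X'. pot_change_unit F s (f n) (p_min (mut n) (f n) (d n) n) (x, l) X')
          \<ge> 1 / (2 * (s + 1))"
        by (rule per_n[OF F s gamma fin _ optimum]) (use elim len lt lb in auto)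
    qed
  qed
qed

end
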